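(* Let $\mathfrak M\models S_{\overline\alpha}$. Assume that $d_{\mathfrak M}(\mathfrak A)=0$ for every finite $\mathfrak A\subseteq\mathfrak M$ and that $\mathfrak M$ has finite closures. Then $\mathfrak M$ is atomic.
   Context: Fix a finite relational language $L$ in which every relation symbol has arity at least $2$. $K_L$ is the class of all finite $L$-structures (including the empty one) in which every relation symbol is interpreted symmetrically and irreflexively. Fix $\overline\alpha:L\to(0,1]$, writing $\overline\alpha_E=\overline\alpha(E)$, such that it is not the case that all symbols of $L$ are binary and $\overline\alpha_E=1$ for all $E$. For $\mathfrak A\in K_L$ let $N_E(\mathfrak A)$ be the number of subsets of $A$ on which $E$ holds and $\delta(\mathfrak A)=|A|-\sum_{E}\overline\alpha_E N_E(\mathfrak A)$; subsets of a structure are identified with induced substructures. $K_{\overline\alpha}=\{\mathfrak A\in K_L:\delta(\mathfrak A')\ge0\text{ for all substructures }\mathfrak A'\subseteq\mathfrak A\}$. For $\mathfrak A\subseteq\mathfrak B$ in $K_L$, $\mathfrak A\le\mathfrak B$ means $\delta(\mathfrak A)\le\delta(\mathfrak A')$ for all $\mathfrak A\subseteq\mathfrak A'\subseteq\mathfrak B$; for finite $\mathfrak A\subseteq\mathfrak M$, $\mathfrak A\le\mathfrak M$ means $\mathfrak A\le\mathfrak B$ for every finite $\mathfrak A\subseteq\mathfrak B\subseteq\mathfrak M$. $S_{\overline\alpha}$ is the theory whose models $\mathfrak M$ are those in which every finite substructure lies in $K_{\overline\alpha}$ and, for all $\mathfrak A\le\mathfrak B$ in $K_{\overline\alpha}$,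 every embedding $\mathfrak A\to\mathfrak M$ extends to an embedding $\mathfrak B\to\mathfrak M$. $\mathfrak M$ has finite closures if every finite $\mathfrak A\subseteq\mathfrak M$ is contained in a finite $\mathfrak B\subseteq\mathfrak M$ with $\mathfrak B\le\mathfrak M$. $d_{\mathfrak M}(\mathfrak A)=\inf\{\delta(\mathfrak B):\mathfrak A\subseteq\mathfrak B,\ \mathfrak B\text{ finite},\ \mathfrak B\le\mathfrak M\}$. *)

theory Defs
  imports Complex_Main
begin

text \<open>
The finite relational language L is the (finite) type 'r; each symbol E
has arity ar E.  A symmetric irreflexive interpretation of E on a carrier A is
represented by the set I E of those subsets of A (of size ar E) on which E holds:
E(a1,...,ak) holds iff the ai are pairwise distinct and {a1,...,ak} is in I E.
Induced substructures of (A, I) on A' \<subseteq> A use the same I restricted to subsets of A'.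
\<close>

definition wf_struct :: "('r \<Rightarrow> nat) \<Rightarrow> 'a set \<Rightarrow> ('r \<Rightarrow> 'a set set) \<Rightarrow> bool" where
  "wf_struct ar A I \<longleftrightarrow> (\<forall>E. \<forall>s\<in>I E. s \<subseteq> A \<and> finite s \<and> card s = ar E)"

definition NE :: "('r \<Rightarrow> 'a set set) \<Rightarrow> 'r \<Rightarrow> 'a set \<Rightarrow> nat" where
  "NE I E A = card {s \<in> I E. s \<subseteq> A}"

definition delta :: "('r::finite \<Rightarrow> real) \<Rightarrow> ('r \<Rightarrow> 'a set set) \<Rightarrow> 'a set \<Rightarrow> real" where
  "delta \<alpha> I A = real (card A) - (\<Sum>E\<in>UNIV. \<alpha> E * real (NE I E A))"

definition in_K_alpha :: "('r::finite \<Rightarrow> real) \<Rightarrow> ('r \<Rightarrow> 'a set set) \<Rightarrow> 'a set \<Rightarrow> bool" where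
  "in_K_alpha \<alpha> I B \<longleftrightarrow> (\<forall>A'. A' \<subseteq> B \<longrightarrow> 0 \<le> delta \<alpha> I A')"

definition strong :: "('r::finite \<Rightarrow> real) \<Rightarrow> ('r \<Rightarrow> 'a set set) \<Rightarrow> 'a set \<Rightarrow> 'a set \<Rightarrow> bool" where
  "strong \<alpha> I A B \<longleftrightarrow> A \<subseteq> B \<and> (\<forall>A'. A \<subseteq> A' \<and> A' \<subseteq> B \<longrightarrow> delta \<alpha> I A \<le> delta \<alpha> I A')"

definition strongM :: "('r::finite \<Rightarrow> real) \<Rightarrow> 'a set \<Rightarrow> ('r \<Rightarrow> 'a set set) \<Rightarrow> 'a set \<Rightarrow> bool" where
  "strongM \<alpha> M I A \<longleftrightarrow> finite A \<and> A \<subseteq> M \<and>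
     (\<forall>B. finite B \<and> A \<subseteq> B \<and> B \<subseteq> M \<longrightarrow> strong \<alpha> I A B)"

definition embedding :: "('b \<Rightarrow> 'a) \<Rightarrow> 'b set \<Rightarrow> ('r \<Rightarrow> 'b set set) \<Rightarrow> 'a set \<Rightarrow> ('r \<Rightarrow> 'a set set) \<Rightarrow> bool" where
  "embedding f A J M I \<longleftrightarrow> inj_on f A \<and> f ` A \<subseteq> M \<and>
     (\<forall>E. \<forall>s. s \<subseteq> A \<longrightarrow> (s \<in> J E \<longleftrightarrow> f ` s \<in> I E))"

text \<open>M is a model of S_alpha.  Finite structures A \<le> B in K_alpha are taken, up to
isomorphism, with carriers finite subsets of nat.\<close>
definition models_S :: "('r::finite \<Rightarrow> nat) \<Rightarrow> ('r \<Rightarrow> real) \<Rightarrow> 'a set \<Rightarrow> ('r \<Rightarrow> 'a set set) \<Rightarrow> bool" where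
  "models_S ar \<alpha> M I \<longleftrightarrow> wf_struct ar M I \<and>
     (\<forall>A. finite A \<and> A \<subseteq> M \<longrightarrow> in_K_alpha \<alpha> I A) \<and>
     (\<forall>(A::nat set) B J f. finite B \<and> wf_struct ar B J \<and> in_K_alpha \<alpha> J B \<and> strong \<alpha> J A B
        \<and> embedding f A J M I \<longrightarrow> (\<exists>g. embedding g B J M I \<and> (\<forall>x\<in>A. g x = f x)))"

definition finite_closures :: "('r::finite \<Rightarrow> real) \<Rightarrow> 'a set \<Rightarrow> ('r \<Rightarrow> 'a set set) \<Rightarrow> bool" where
  "finite_closures \<alpha> M I \<longleftrightarrow>
     (\<forall>A. finite A \<and> A \<subseteq> M \<longrightarrow> (\<exists>B. A \<subseteq> B \<and> strongM \<alpha> M I B))"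

definition dM :: "('r::finite \<Rightarrow> real) \<Rightarrow> 'a set \<Rightarrow> ('r \<Rightarrow> 'a set set) \<Rightarrow> 'a set \<Rightarrow> real" where
  "dM \<alpha> M I A = Inf {delta \<alpha> I B | B. A \<subseteq> B \<and> strongM \<alpha> M I B}"

datatype 'r fm = Rel 'r "nat list" | Eq nat nat | Neg "'r fm" | Conj "'r fm" "'r fm" | Ex nat "'r fm"

fun fv :: "'r fm \<Rightarrow> nat set" where
  "fv (Rel E xs) = set xs"
| "fv (Eq x y) = {x, y}"
| "fv (Neg \<phi>) = fv \<phi>"
| "fv (Conj \<phi> \<psi>) = fv \<phi> \<union> fv \<psi>"
| "fv (Ex x \<phi>) = fv \<phi> - {x}"

fun sat :: "'a set \<Rightarrow> ('r \<Rightarrow> 'a set set) \<Rightarrow> (nat \<Rightarrow> 'a) \<Rightarrow> 'r fm \<Rightarrow> bool" where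
  "sat M I v (Rel E xs) \<longleftrightarrow> distinct (map v xs) \<and> set (map v xs) \<in> I E"
| "sat M I v (Eq x y) \<longleftrightarrow> v x = v y"
| "sat M I v (Neg \<phi>) \<longleftrightarrow> \<not> sat M I v \<phi>"
| "sat M I v (Conj \<phi> \<psi>) \<longleftrightarrow> sat M I v \<phi> \<and> sat M I v \<psi>"
| "sat M I v (Ex x \<phi>) \<longleftrightarrow> (\<exists>a\<in>M. sat M I (v(x := a)) \<phi>)"

text \<open>M is atomic: every finite tuple (a_0,...,a_{n-1}), given as the values of an
assignment on variables 0..n-1, realizes a type isolated (in Th(M)) by a formula phi.\<close>
definition atomic_model :: "'a set \<Rightarrow> ('r \<Rightarrow> 'a set set) \<Rightarrow> bool" where
  "atomic_model M I \<longleftrightarrow> (\<forall>n v. (\<forall>i<n. v i \<in> M) \<longrightarrow>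
     (\<exists>\<phi>. fv \<phi> \<subseteq> {..<n} \<and> sat M I v \<phi> \<and>
        (\<forall>\<psi>. fv \<psi> \<subseteq> {..<n} \<and> sat M I v \<psi> \<longrightarrow>
           (\<forall>w. (\<forall>i<n. w i \<in> M) \<and> sat M I w \<phi> \<longrightarrow> sat M I w \<psi>))))"

end

theory Submission
  imports Defs
begin


lemma sat_cong: "(\<forall>i\<in>fv \<psi>. v i = w i) \<Longrightarrow> sat M I v \<psi> = sat M I w \<psi>"
proof (induction \<psi> arbitrary: v w)
  case (Rel E xs)
  then have "map v xs = map w xs" by (auto intro: map_cong)
  then show ?case by (simp only: sat.simps)
next
  case (Ex x \<phi>)
  have "\<And>a. sat M I (v(x := a)) \<phi> = sat M I (w(x := a)) \<phi>"
    using Ex.IH Ex.prems by auto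
  then show ?case by simp
next
  case (Conj \<phi>1 \<phi>2)
  then show ?case by (metis UnCI sat.simps(4) fv.simps(4))
qed auto

lemma finite_NE_set: "finite X \<Longrightarrow> finite {s \<in> I E. s \<subseteq> X}"
  by (rule finite_subset[of _ "Pow X"]) auto

lemma NE_submod: assumes "finite X" "finite Y"
  shows "NE I E X + NE I E Y \<le> NE I E (X \<union> Y) + NE I E (X \<inter> Y)"
proof -
  let ?P = "{s \<in> I E. s \<subseteq> X}" and ?Q = "{s \<in> I E. s \<subseteq> Y}"
  have f: "finite ?P" "finite ?Q" "finite {s \<in> I E. s \<subseteq> X \<union> Y}"
    using assms finite_NE_set by auto
  have "card ?P + card ?Q = card (?P \<union> ?Q) + card (?P \<inter> ?Q)"
    using card_Un_Int[OF f(1) f(2)] .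
  moreover have "card (?P \<union> ?Q) \<le> card {s \<in> I E. s \<subseteq> X \<union> Y}"
    by (rule card_mono[OF f(3)]) auto
  moreover have "?P \<inter> ?Q = {s \<in> I E. s \<subseteq> X \<inter> Y}" by auto
  ultimately show ?thesis unfolding NE_def by simp
qed

lemma delta_submod:
  assumes "finite X" "finite Y" "\<And>E. 0 \<le> \<alpha> E"
  shows "delta \<alpha> I (X \<union> Y) + delta \<alpha> I (X \<inter> Y) \<le> delta \<alpha> I X + delta \<alpha> I Y"
proof -
  have c: "real (card X) + real (card Y) = real (card (X \<union> Y)) + real (card (X \<inter> Y))"
    using card_Un_Int[OF assms(1,2)] by (simp only: of_nat_add[symmetric])
  have "(\<Sum>E\<in>UNIV. \<alpha> E * real (NE I E X)) + (\<Sum>E\<in>UNIV. \<alpha> E * real (NE I E Y))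
      \<le> (\<Sum>E\<in>UNIV. \<alpha> E * real (NE I E (X \<union> Y))) + (\<Sum>E\<in>UNIV. \<alpha> E * real (NE I E (X \<inter> Y)))"
  proof -
    have "\<And>E. \<alpha> E * real (NE I E X) + \<alpha> E * real (NE I E Y) \<le> \<alpha> E * real (NE I E (X \<union> Y)) + \<alpha> E * real (NE I E (X \<inter> Y))"
    proof -
      fix E
      have "real (NE I E X) + real (NE I E Y) \<le> real (NE I E (X \<union> Y)) + real (NE I E (X \<inter> Y))"
        using NE_submod[OF assms(1,2), of I E] by linarith
      then have "\<alpha> E * (real (NE I E X) + real (NE I E Y)) \<le> \<alpha> E * (real (NE I E (X \<union> Y)) + real (NE I E (X \<inter> Y)))"
        using assms(3) by (rule mult_left_mono) 
      then show "?thesis E" by (simp add: algebra_simps)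
    qed
    then have "(\<Sum>E\<in>UNIV. \<alpha> E * real (NE I E X) + \<alpha> E * real (NE I E Y)) \<le> (\<Sum>E\<in>UNIV. \<alpha> E * real (NE I E (X \<union> Y)) + \<alpha> E * real (NE I E (X \<inter> Y)))"
      by (rule sum_mono)
    then show ?thesis by (simp only: sum.distrib)
  qed
  then show ?thesis unfolding delta_def using c by linarith
qed

lemma strongM_iff: "strongM \<alpha> M I Z \<longleftrightarrow> finite Z \<and> Z \<subseteq> M \<and>
   (\<forall>D. finite D \<and> Z \<subseteq> D \<and> D \<subseteq> M \<longrightarrow> delta \<alpha> I Z \<le> delta \<alpha> I D)"
proof
  assume "strongM \<alpha> M I Z"
  then show "finite Z \<and> Z \<subseteq> M \<and>
   (\<forall>D. finite D \<and> Z \<subseteq> D \<and> D \<subseteq> M \<longrightarrow> delta \<alpha> I Z \<le> delta \<alpha> I D)"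
    unfolding strongM_def strong_def by (meson order_refl)
next
  assume a: "finite Z \<and> Z \<subseteq> M \<and>
   (\<forall>D. finite D \<and> Z \<subseteq> D \<and> D \<subseteq> M \<longrightarrow> delta \<alpha> I Z \<le> delta \<alpha> I D)"
  have r: "delta \<alpha> I Z \<le> delta \<alpha> I A'" if "finite B" "Z \<subseteq> A'" "A' \<subseteq> B" "B \<subseteq> M" for A' B
  proof -
    have "finite A'" using that finite_subset by blast
    moreover have "A' \<subseteq> M" using that by blast
    ultimately show ?thesis using a that(2) by blast
  qed
  show "strongM \<alpha> M I Z" unfolding strongM_def strong_def
  proof (intro conjI allI impI)
    show "finite Z" "Z \<subseteq> M" using a by auto
  next
    fix B assume "finite B \<and> Z \<subseteq> B \<and> B \<subseteq> M"
    then show "Z \<subseteq> B" by simp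
  next
    fix B A' assume B: "finite B \<and> Z \<subseteq> B \<and> B \<subseteq> M" and A': "Z \<subseteq> A' \<and> A' \<subseteq> B"
    show "delta \<alpha> I Z \<le> delta \<alpha> I A'" using B A' by (intro r[of B A']) auto
  qed
qed

lemma strongM_Int:
  assumes "strongM \<alpha> M I X" "strongM \<alpha> M I Y" "\<And>E. 0 \<le> \<alpha> E"
  shows "strongM \<alpha> M I (X \<inter> Y)"
proof -
  have X: "finite X" "X \<subseteq> M" "\<And>D. finite D \<Longrightarrow> X \<subseteq> D \<Longrightarrow> D \<subseteq> M \<Longrightarrow> delta \<alpha> I X \<le> delta \<alpha> I D"
    using assms(1) unfolding strongM_iff by auto
  have Y: "finite Y" "Y \<subseteq> M" "\<And>D. finite D \<Longrightarrow> Y \<subseteq> D \<Longrightarrow> D \<subseteq> M \<Longrightarrow> delta \<alpha> I Y \<le> delta \<alpha> I D"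
    using assms(2) unfolding strongM_iff by auto
  { fix D assume D: "finite D" "X \<inter> Y \<subseteq> D" "D \<subseteq> M"
    have "delta \<alpha> I (D \<union> Y) + delta \<alpha> I (D \<inter> Y) \<le> delta \<alpha> I D + delta \<alpha> I Y"
      using delta_submod[OF D(1) Y(1) assms(3)] .
    moreover have "delta \<alpha> I Y \<le> delta \<alpha> I (D \<union> Y)" using Y D by auto
    ultimately have 1: "delta \<alpha> I (D \<inter> Y) \<le> delta \<alpha> I D" by linarith
    let ?Z = "D \<inter> Y"
    have e: "?Z \<inter> X = X \<inter> Y" using D by auto
    have s1: "delta \<alpha> I (?Z \<union> X) + delta \<alpha> I (?Z \<inter> X) \<le> delta \<alpha> I ?Z + delta \<alpha> I X"
      using delta_submod[where X="D \<inter> Y" and Y=X and I=I, OF _ X(1) assms(3)] D(1) by simp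
    then have s1': "delta \<alpha> I (?Z \<union> X) + delta \<alpha> I (X \<inter> Y) \<le> delta \<alpha> I ?Z + delta \<alpha> I X"
      by (simp only: e)
    have m: "delta \<alpha> I X \<le> delta \<alpha> I (?Z \<union> X)" using D Y X(1,2) by (intro X(3)) auto
    from s1' m have "delta \<alpha> I (X \<inter> Y) \<le> delta \<alpha> I ?Z" by linarith
    with 1 have "delta \<alpha> I (X \<inter> Y) \<le> delta \<alpha> I D" by linarith }
  then show ?thesis unfolding strongM_iff using X Y by auto
qed


lemma emb_restrict: "embedding f A J M I \<Longrightarrow> B \<subseteq> A \<Longrightarrow> embedding f B J M I"
  unfolding embedding_def by (auto intro: inj_on_subset)

lemma emb_delta: assumes "embedding f A J M I"
  shows "delta \<alpha> I (f ` A) = delta \<alpha> J A"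
proof -
  have inj: "inj_on f A" and pres: "\<And>E s. s \<subseteq> A \<Longrightarrow> s \<in> J E \<longleftrightarrow> f ` s \<in> I E"
    using assms unfolding embedding_def by auto
  have c: "card (f ` A) = card A" using card_image[OF inj] .
  have "NE I E (f ` A) = NE J E A" for E
  proof -
    have eq: "{s \<in> I E. s \<subseteq> f ` A} = image f ` {s \<in> J E. s \<subseteq> A}"
    proof
      show "{s \<in> I E. s \<subseteq> f ` A} \<subseteq> image f ` {s \<in> J E. s \<subseteq> A}"
      proof
        fix s assume s: "s \<in> {s \<in> I E. s \<subseteq> f ` A}"
        let ?t = "{x \<in> A. f x \<in> s}"
        have ft: "f ` ?t = s" using s by auto
        have tA: "?t \<subseteq> A" by blast
        have "s \<in> I E" using s by simp
        then have "?t \<in> J E" using pres[OF tA, of E] ft by simp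
        then have "?t \<in> {s \<in> J E. s \<subseteq> A}" using tA by simp
        then show "s \<in> image f ` {s \<in> J E. s \<subseteq> A}" by (rule image_eqI[where f="image f", OF ft[symmetric]])
      qed
      show "image f ` {s \<in> J E. s \<subseteq> A} \<subseteq> {s \<in> I E. s \<subseteq> f ` A}"
        using pres by auto
    qed
    have "inj_on (image f) {s \<in> J E. s \<subseteq> A}"
      by (rule inj_on_subset[OF inj_on_image_Pow[OF inj]]) auto
    then show ?thesis unfolding NE_def eq by (simp add: card_image)
  qed
  then show ?thesis unfolding delta_def c by simp
qed

lemma emb_comp: assumes e: "embedding e C K B J" and g: "embedding g B J M I"
  shows "embedding (g \<circ> e) C K M I"
proof -
  have e1: "inj_on e C" "e ` C \<subseteq> B" "\<And>E s. s \<subseteq> C \<Longrightarrow> s \<in> K E \<longleftrightarrow> e ` s \<in> J E"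
    using e unfolding embedding_def by auto
  have g1: "inj_on g B" "g ` B \<subseteq> M" "\<And>E s. s \<subseteq> B \<Longrightarrow> s \<in> J E \<longleftrightarrow> g ` s \<in> I E"
    using g unfolding embedding_def by auto
  show ?thesis unfolding embedding_def
  proof (intro conjI allI impI)
    show "inj_on (g \<circ> e) C" using e1 g1 by (auto intro: comp_inj_on inj_on_subset)
    show "(g \<circ> e) ` C \<subseteq> M" using e1(2) g1(2) by (auto simp: image_comp[symmetric])
    fix E s assume s: "s \<subseteq> C"
    then have "e ` s \<subseteq> B" using e1 by auto
    then show "s \<in> K E \<longleftrightarrow> (g \<circ> e) ` s \<in> I E" using e1(3)[OF s] g1(3) by (simp add: image_comp)
  qed
qed

definition good :: "('r::finite \<Rightarrow> real) \<Rightarrow> ('r \<Rightarrow> 'a set set) \<Rightarrow> 'a set \<Rightarrow> 'a set \<Rightarrow> bool" where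
  "good \<alpha> I M X \<longleftrightarrow> finite X \<and> X \<subseteq> M \<and> delta \<alpha> I X = 0"

definition piso :: "('r::finite \<Rightarrow> real) \<Rightarrow> ('r \<Rightarrow> 'a set set) \<Rightarrow> 'a set \<Rightarrow> ('a \<Rightarrow> 'a) \<Rightarrow> 'a set \<Rightarrow> bool" where
  "piso \<alpha> I M h X \<longleftrightarrow> good \<alpha> I M X \<and> embedding h X I M I"

lemma K_nonneg: "models_S ar \<alpha> M I \<Longrightarrow> finite D \<Longrightarrow> D \<subseteq> M \<Longrightarrow> 0 \<le> delta \<alpha> I D"
  unfolding models_S_def in_K_alpha_def by blast

lemma piso_inv: assumes "piso \<alpha> I M h X" shows "piso \<alpha> I M (inv_into X h) (h ` X)"
proof -
  have g: "finite X" "X \<subseteq> M" "delta \<alpha> I X = 0" and e: "embedding h X I M I"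
    using assms unfolding piso_def good_def by auto
  have inj: "inj_on h X" and hM: "h ` X \<subseteq> M" and pr: "\<And>E s. s \<subseteq> X \<Longrightarrow> s \<in> I E \<longleftrightarrow> h ` s \<in> I E"
    using e unfolding embedding_def by auto
  have "good \<alpha> I M (h ` X)" unfolding good_def using g hM emb_delta[OF e, of \<alpha>] by auto
  moreover have "embedding (inv_into X h) (h ` X) I M I"
    unfolding embedding_def
  proof (intro conjI allI impI)
    show "inj_on (inv_into X h) (h ` X)" by (rule inj_on_inv_into) auto
    show "inv_into X h ` h ` X \<subseteq> M" using inj g by simp
    fix E s assume s: "s \<subseteq> h ` X"
    have "inv_into X h ` s \<subseteq> X" using s by (auto intro: inv_into_into)
    moreover have "h ` inv_into X h ` s = s" by (rule image_inv_into_cancel[OF refl s])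
    ultimately show "s \<in> I E \<longleftrightarrow> inv_into X h ` s \<in> I E" using pr by metis
  qed
  ultimately show ?thesis unfolding piso_def by auto
qed

lemma good_ext:
  assumes model: "models_S ar \<alpha> M I" and alpha: "\<And>E. 0 \<le> \<alpha> E"
    and d0: "\<And>A. finite A \<Longrightarrow> A \<subseteq> M \<Longrightarrow> dM \<alpha> M I A = 0"
    and closures: "finite_closures \<alpha> M I"
    and A: "finite A" "A \<subseteq> M"
  shows "\<exists>B. A \<subseteq> B \<and> good \<alpha> I M B"
proof -
  let ?S = "{B. A \<subseteq> B \<and> strongM \<alpha> M I B}"
  have "\<exists>B. A \<subseteq> B \<and> strongM \<alpha> M I B" using closures A unfolding finite_closures_def by simp
  then obtain B1 where "A \<subseteq> B1" "strongM \<alpha> M I B1" by (elim exE conjE)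
  then have "B1 \<in> ?S" by simp
  then obtain B0 where B0: "B0 \<in> ?S" and min: "\<And>B. B \<in> ?S \<Longrightarrow> card B0 \<le> card B"
    using ex_has_least_nat[of "\<lambda>B. B \<in> ?S" B1 card] by blast
  have fB0: "finite B0" and sB0: "strongM \<alpha> M I B0" using B0 strongM_iff by auto
  have sub: "B0 \<subseteq> B" if B: "B \<in> ?S" for B
  proof -
    have "B0 \<inter> B \<in> ?S" using B B0 strongM_Int[of \<alpha> M I B0 B] alpha by auto
    then have "card B0 \<le> card (B0 \<inter> B)" using min by blast
    then have "B0 \<inter> B = B0" using fB0 by (meson card_seteq inf_le1 rev_finite_subset)
    then show ?thesis by auto
  qed
  have "Inf {delta \<alpha> I B | B. A \<subseteq> B \<and> strongM \<alpha> M I B} = delta \<alpha> I B0"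
  proof (rule cInf_eq_minimum)
    show "delta \<alpha> I B0 \<in> {delta \<alpha> I B | B. A \<subseteq> B \<and> strongM \<alpha> M I B}" using B0 by auto
    fix x assume "x \<in> {delta \<alpha> I B | B. A \<subseteq> B \<and> strongM \<alpha> M I B}"
    then obtain B where B: "B \<in> ?S" "x = delta \<alpha> I B" by auto
    have "B0 \<subseteq> B" using sub B by auto
    moreover have "finite B" "B \<subseteq> M" using B(1) unfolding strongM_iff by auto
    ultimately show "delta \<alpha> I B0 \<le> x" using sB0 B unfolding strongM_iff by auto
  qed
  then have "delta \<alpha> I B0 = 0" using d0[OF A] unfolding dM_def by simp
  then show ?thesis using B0 sB0 unfolding good_def strongM_iff by auto
qed


lemma forth:
  assumes model: "models_S ar \<alpha> M I"
    and gext: "\<And>A. finite A \<Longrightarrow> A \<subseteq> M \<Longrightarrow> \<exists>B. A \<subseteq> B \<and> good \<alpha> I M B"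
    and p: "piso \<alpha> I M h X" and c: "c \<in> M"
  shows "\<exists>h' X'. piso \<alpha> I M h' X' \<and> X \<subseteq> X' \<and> c \<in> X' \<and> (\<forall>x\<in>X. h' x = h x)"
proof -
  have gX: "finite X" "X \<subseteq> M" "delta \<alpha> I X = 0" and eh: "embedding h X I M I"
    using p unfolding piso_def good_def by auto
  have wfM: "wf_struct ar M I" and Kall: "\<And>A. finite A \<Longrightarrow> A \<subseteq> M \<Longrightarrow> in_K_alpha \<alpha> I A"
    and rich: "\<And>(A::nat set) B J f. finite B \<Longrightarrow> wf_struct ar B J \<Longrightarrow> in_K_alpha \<alpha> J B \<Longrightarrow> strong \<alpha> J A B
        \<Longrightarrow> embedding f A J M I \<Longrightarrow> (\<exists>g. embedding g B J M I \<and> (\<forall>x\<in>A. g x = f x))"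
    using model unfolding models_S_def by auto
  obtain C where C: "insert c X \<subseteq> C" "good \<alpha> I M C" using gext[of "insert c X"] gX c by auto
  have fC: "finite C" and CM: "C \<subseteq> M" and dC: "delta \<alpha> I C = 0" using C unfolding good_def by auto
  obtain e where e: "bij_betw e C {0..<card C}" using ex_bij_betw_finite_nat[OF fC] by blast
  define Bn where "Bn = {0..<card C}"
  define d where "d = inv_into C e"
  have einj: "inj_on e C" and eC: "e ` C = Bn" using e unfolding bij_betw_def Bn_def by auto
  have dbij: "bij_betw d Bn C" unfolding d_def Bn_def using bij_betw_inv_into[OF e] .
  have dinj: "inj_on d Bn" and dBn: "d ` Bn = C" using dbij unfolding bij_betw_def by auto
  have de: "\<And>x. x \<in> C \<Longrightarrow> d (e x) = x" unfolding d_def using einj by simp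
  have dse: "\<And>s. s \<subseteq> C \<Longrightarrow> d ` e ` s = s" unfolding d_def using einj by simp
  define J where "J = (\<lambda>E. {s. s \<subseteq> Bn \<and> d ` s \<in> I E})"
  have ed: "embedding d Bn J M I" unfolding embedding_def J_def using dinj dBn CM by auto
  define An where "An = e ` X"
  have AnBn: "An \<subseteq> Bn" unfolding An_def using C eC by auto
  have dAn: "d ` An = X" unfolding An_def using dse C by auto
  define f where "f = h \<circ> d"
  have finB: "finite Bn" unfolding Bn_def by simp
  have wfB: "wf_struct ar Bn J" unfolding wf_struct_def
  proof (intro allI ballI conjI)
    fix E s assume s: "s \<in> J E"
    then have sB: "s \<subseteq> Bn" and ds: "d ` s \<in> I E" unfolding J_def by auto
    show "s \<subseteq> Bn" by fact
    show "finite s" using sB finB finite_subset by blast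
    have "card (d ` s) = card s" using inj_on_subset[OF dinj sB] card_image by blast
    moreover have "card (d ` s) = ar E" using wfM ds unfolding wf_struct_def by blast
    ultimately show "card s = ar E" by simp
  qed
  have dsub: "delta \<alpha> J A' = delta \<alpha> I (d ` A')" if "A' \<subseteq> Bn" for A'
    using emb_delta[OF emb_restrict[OF ed that], of \<alpha>] by simp
  have KB: "in_K_alpha \<alpha> J Bn" unfolding in_K_alpha_def
  proof (intro allI impI)
    fix A' assume A': "A' \<subseteq> Bn"
    have "d ` A' \<subseteq> C" using A' dBn by auto
    then have "0 \<le> delta \<alpha> I (d ` A')" using Kall[OF fC CM] unfolding in_K_alpha_def by blast
    then show "0 \<le> delta \<alpha> J A'" using dsub[OF A'] by simp
  qed
  have strAB: "strong \<alpha> J An Bn" unfolding strong_def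
  proof (intro conjI allI impI)
    show "An \<subseteq> Bn" by fact
    fix A' assume A': "An \<subseteq> A' \<and> A' \<subseteq> Bn"
    have "delta \<alpha> J An = 0" using dsub[OF AnBn] dAn gX by simp
    then show "delta \<alpha> J An \<le> delta \<alpha> J A'" using KB A' unfolding in_K_alpha_def by simp
  qed
  have hinj: "inj_on h X" and hM: "h ` X \<subseteq> M" and hpr: "\<And>E s. s \<subseteq> X \<Longrightarrow> s \<in> I E \<longleftrightarrow> h ` s \<in> I E"
    using eh unfolding embedding_def by auto
  have ef: "embedding f An J M I" unfolding embedding_def
  proof (intro conjI allI impI)
    show "inj_on f An" unfolding f_def
      using inj_on_subset[OF dinj AnBn] hinj dAn by (auto intro: comp_inj_on)
    show "f ` An \<subseteq> M" unfolding f_def using hM dAn by (auto simp: image_comp[symmetric])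
    fix E s assume s: "s \<subseteq> An"
    then have "d ` s \<subseteq> X" using dAn by auto
    moreover have "f ` s = h ` d ` s" unfolding f_def by (simp add: image_comp)
    ultimately show "s \<in> J E \<longleftrightarrow> f ` s \<in> I E" unfolding J_def using s AnBn hpr
      by auto
  qed
  obtain g where g: "embedding g Bn J M I" "\<forall>x\<in>An. g x = f x"
    using rich[OF finB wfB KB strAB ef] by blast
  have ee: "embedding e C I Bn J" unfolding embedding_def
  proof (intro conjI allI impI)
    show "inj_on e C" by fact
    show "e ` C \<subseteq> Bn" using eC by simp
    fix E s assume s: "s \<subseteq> C"
    then show "s \<in> I E \<longleftrightarrow> e ` s \<in> J E" unfolding J_def using dse[OF s] eC by auto
  qed
  have eg: "embedding (g \<circ> e) C I M I" by (rule emb_comp[OF ee g(1)])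
  have "piso \<alpha> I M (g \<circ> e) C" unfolding piso_def using C eg by auto
  moreover have "\<forall>x\<in>X. (g \<circ> e) x = h x"
  proof
    fix x assume x: "x \<in> X"
    then have "e x \<in> An" unfolding An_def by auto
    then have "g (e x) = h (d (e x))" using g(2) unfolding f_def by auto
    also have "\<dots> = h x" using de x C by auto
    finally show "(g \<circ> e) x = h x" by simp
  qed
  ultimately show ?thesis using C by blast
qed

lemma pres:
  assumes ext: "\<And>h X c. P h X \<Longrightarrow> c \<in> M \<Longrightarrow> \<exists>h' X'. P h' X' \<and> X \<subseteq> X' \<and> c \<in> X' \<and> (\<forall>x\<in>X. h' x = h x)"
    and inv: "\<And>h X. P h X \<Longrightarrow> P (inv_into X h) (h ` X)"
    and emb: "\<And>h X. P h X \<Longrightarrow> embedding h X I M I"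
  shows "P h X \<Longrightarrow> (\<forall>i\<in>fv \<psi>. v i \<in> X) \<Longrightarrow> sat M I v \<psi> = sat M I (h \<circ> v) \<psi>"
proof (induction \<psi> arbitrary: h X v)
  case (Rel E xs)
  have hinj: "inj_on h X" and hpr: "\<And>E s. s \<subseteq> X \<Longrightarrow> s \<in> I E \<longleftrightarrow> h ` s \<in> I E"
    using emb[OF Rel.prems(1)] unfolding embedding_def by auto
  have sub: "set (map v xs) \<subseteq> X" using Rel.prems(2) by auto
  have "distinct (map (h \<circ> v) xs) = distinct (map v xs)"
    using distinct_map inj_on_subset[OF hinj sub] by (metis map_map)
  moreover have "set (map (h \<circ> v) xs) = h ` set (map v xs)" by auto
  ultimately show ?case using hpr[OF sub] by (simp only: sat.simps)
next
  case (Eq x y)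
  have hinj: "inj_on h X" using emb[OF Eq.prems(1)] unfolding embedding_def by auto
  then show ?case using Eq.prems(2) by (auto dest: inj_onD)
next
  case (Neg \<phi>) then show ?case by simp
next
  case (Conj \<phi>1 \<phi>2) then show ?case by simp
next
  case (Ex x \<phi>)
  show ?case
  proof
    assume "sat M I v (fm.Ex x \<phi>)"
    then obtain a where a: "a \<in> M" "sat M I (v(x := a)) \<phi>" by auto
    obtain h' X' where h': "P h' X'" "X \<subseteq> X'" "a \<in> X'" "\<forall>y\<in>X. h' y = h y"
      using ext[OF Ex.prems(1) a(1)] by blast
    have "\<forall>i\<in>fv \<phi>. (v(x := a)) i \<in> X'" using Ex.prems(2) h' by auto
    then have "sat M I (h' \<circ> v(x := a)) \<phi>" using Ex.IH[OF h'(1)] a(2) by blast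
    moreover have "\<forall>i\<in>fv \<phi>. (h' \<circ> v(x := a)) i = ((h \<circ> v)(x := h' a)) i"
      using Ex.prems(2) h' by auto
    ultimately have "sat M I ((h \<circ> v)(x := h' a)) \<phi>" using sat_cong by blast
    moreover have "h' a \<in> M" using emb[OF h'(1)] h'(3) unfolding embedding_def by auto
    ultimately show "sat M I (h \<circ> v) (fm.Ex x \<phi>)" by auto
  next
    assume "sat M I (h \<circ> v) (fm.Ex x \<phi>)"
    then obtain b where b: "b \<in> M" "sat M I ((h \<circ> v)(x := b)) \<phi>" by auto
    have hinj: "inj_on h X" using emb[OF Ex.prems(1)] unfolding embedding_def by auto
    obtain k Y where k: "P k Y" "h ` X \<subseteq> Y" "b \<in> Y" "\<forall>y\<in>h ` X. k y = inv_into X h y"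
      using ext[OF inv[OF Ex.prems(1)] b(1)] by blast
    have "\<forall>i\<in>fv \<phi>. ((h \<circ> v)(x := b)) i \<in> Y" using Ex.prems(2) k by auto
    then have "sat M I (k \<circ> (h \<circ> v)(x := b)) \<phi>" using Ex.IH[OF k(1)] b(2) by blast
    moreover have "\<forall>i\<in>fv \<phi>. (k \<circ> (h \<circ> v)(x := b)) i = (v(x := k b)) i"
      using Ex.prems(2) k hinj by auto
    ultimately have "sat M I (v(x := k b)) \<phi>" using sat_cong by blast
    moreover have "k b \<in> M" using emb[OF k(1)] k(3) unfolding embedding_def by auto
    ultimately show "sat M I v (fm.Ex x \<phi>)" by auto
  qed
qed


definition lit :: "'a set \<Rightarrow> ('r \<Rightarrow> 'a set set) \<Rightarrow> (nat \<Rightarrow> 'a) \<Rightarrow> 'r fm \<Rightarrow> 'r fm" where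
  "lit M I w \<phi> = (if sat M I w \<phi> then \<phi> else Neg \<phi>)"

fun conjs :: "'r fm list \<Rightarrow> 'r fm" where
  "conjs [] = Neg (Ex 0 (Neg (Eq 0 0)))"
| "conjs (\<phi> # \<phi>s) = Conj \<phi> (conjs \<phi>s)"

fun exs :: "nat list \<Rightarrow> 'r fm \<Rightarrow> 'r fm" where
  "exs [] \<phi> = \<phi>"
| "exs (x # xs) \<phi> = Ex x (exs xs \<phi>)"

lemma sat_conjs: "sat M I v (conjs l) \<longleftrightarrow> (\<forall>\<phi>\<in>set l. sat M I v \<phi>)"
  by (induction l) auto

lemma fv_conjs: "fv (conjs l) = (\<Union>\<phi>\<in>set l. fv \<phi>)"
  by (induction l) auto

lemma fv_exs: "fv (exs xs \<phi>) = fv \<phi> - set xs"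
  by (induction xs) auto

lemma sat_exs: "sat M I w0 (exs xs \<phi>) \<longleftrightarrow>
  (\<exists>w'. (\<forall>i. i \<notin> set xs \<longrightarrow> w' i = w0 i) \<and> (\<forall>i\<in>set xs. w' i \<in> M) \<and> sat M I w' \<phi>)"
proof (induction xs arbitrary: w0)
  case Nil
  then show ?case by (auto simp: sat_cong[of \<phi>] ) (metis (full_types) ext)
next
  case (Cons x xs)
  show ?case
  proof
    assume "sat M I w0 (exs (x # xs) \<phi>)"
    then obtain a where a: "a \<in> M" "sat M I (w0(x := a)) (exs xs \<phi>)" by auto
    then obtain w' where w': "\<forall>i. i \<notin> set xs \<longrightarrow> w' i = (w0(x := a)) i" "\<forall>i\<in>set xs. w' i \<in> M" "sat M I w' \<phi>"
      using Cons.IH by blast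
    then show "\<exists>w'. (\<forall>i. i \<notin> set (x # xs) \<longrightarrow> w' i = w0 i) \<and> (\<forall>i\<in>set (x # xs). w' i \<in> M) \<and> sat M I w' \<phi>"
    proof (intro exI[of _ w'] conjI allI impI ballI)
      fix i assume "i \<notin> set (x # xs)"
      then show "w' i = w0 i" using w'(1) by auto
    next
      fix i assume i: "i \<in> set (x # xs)"
      show "w' i \<in> M"
      proof (cases "i \<in> set xs")
        case True then show ?thesis using w'(2) by auto
      next
        case False
        then have "i = x" using i by auto
        then show ?thesis using w'(1) False a(1) by auto
      qed
    next
      show "sat M I w' \<phi>" by fact
    qed
  next
    assume "\<exists>w'. (\<forall>i. i \<notin> set (x # xs) \<longrightarrow> w' i = w0 i) \<and> (\<forall>i\<in>set (x # xs). w' i \<in> M) \<and> sat M I w' \<phi>"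
    then obtain w' where w': "\<forall>i. i \<notin> set (x # xs) \<longrightarrow> w' i = w0 i" "\<forall>i\<in>set (x # xs). w' i \<in> M" "sat M I w' \<phi>"
      by blast
    have "\<forall>i. i \<notin> set xs \<longrightarrow> w' i = (w0(x := w' x)) i" using w'(1) by auto
    moreover have "\<forall>i\<in>set xs. w' i \<in> M" using w'(2) by simp
    ultimately have "sat M I (w0(x := w' x)) (exs xs \<phi>)" using Cons.IH[of "w0(x := w' x)"] w'(3) by blast
    then show "sat M I w0 (exs (x # xs) \<phi>)" using w'(2) by auto
  qed
qed


theorem lemma5p8:
  fixes ar :: "'r::finite \<Rightarrow> nat" and \<alpha> :: "'r \<Rightarrow> real"
    and M :: "'a set" and I :: "'r \<Rightarrow> 'a set set"
  assumes arity: "\<And>E. ar E \<ge> 2"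
    and alpha: "\<And>E. 0 < \<alpha> E \<and> \<alpha> E \<le> 1"
    and nontriv: "\<not> (\<forall>E. ar E = 2 \<and> \<alpha> E = 1)"
    and model: "models_S ar \<alpha> M I"
    and d0: "\<And>A. finite A \<Longrightarrow> A \<subseteq> M \<Longrightarrow> dM \<alpha> M I A = 0"
    and closures: "finite_closures \<alpha> M I"
  shows "atomic_model M I"
  unfolding atomic_model_def
proof (intro allI impI)
  fix n :: nat and v :: "nat \<Rightarrow> 'a" assume vM: "\<forall>i<n. v i \<in> M"
  have alpha0: "\<And>E. 0 \<le> \<alpha> E" using alpha less_imp_le by blast
  have gext: "\<And>A. finite A \<Longrightarrow> A \<subseteq> M \<Longrightarrow> \<exists>B. A \<subseteq> B \<and> good \<alpha> I M B"
    using good_ext[OF model alpha0 d0 closures] by blast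
  have wfM: "wf_struct ar M I" using model unfolding models_S_def by auto
  let ?P = "piso \<alpha> I M"
  have pr: "\<And>h X \<psi> v. ?P h X \<Longrightarrow> (\<forall>i\<in>fv \<psi>. v i \<in> X) \<Longrightarrow> sat M I v \<psi> = sat M I (h \<circ> v) \<psi>"
  proof -
    have ext: "\<And>h X c. ?P h X \<Longrightarrow> c \<in> M \<Longrightarrow> \<exists>h' X'. ?P h' X' \<and> X \<subseteq> X' \<and> c \<in> X' \<and> (\<forall>x\<in>X. h' x = h x)"
      using forth[OF model gext] by blast
    have emb: "\<And>h X. ?P h X \<Longrightarrow> embedding h X I M I" by (simp add: piso_def)
    fix h X \<psi> v
    show "?P h X \<Longrightarrow> (\<forall>i\<in>fv \<psi>. v i \<in> X) \<Longrightarrow> sat M I v \<psi> = sat M I (h \<circ> v) \<psi>"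
      by (rule pres[where P = ?P, OF ext piso_inv emb])
  qed
  define A where "A = v ` {..<n}"
  have "finite A" unfolding A_def by simp
  moreover have "A \<subseteq> M" unfolding A_def using vM by auto
  ultimately obtain B where AB: "A \<subseteq> B" and gB: "good \<alpha> I M B" using gext by blast
  have fB: "finite B" and BM: "B \<subseteq> M" using gB unfolding good_def by auto
  obtain bs where bs: "set bs = B" "distinct bs" using finite_distinct_list[OF fB] by blast
  define N where "N = n + length bs"
  define w where "w = (\<lambda>i. if i < n then v i else if i < N then bs ! (i - n) else v i)"
  obtain es where es: "set es = (UNIV :: 'r set)" using finite_list[of "UNIV :: 'r set"] by auto
  define atoms where "atoms = [Eq i j. i <- [0..<N], j <- [0..<N]] @
     concat (map (\<lambda>E. map (Rel E) (List.n_lists (ar E) [0..<N])) es)"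
  define Diag where "Diag = conjs (map (lit M I w) atoms)"
  define \<phi> where "\<phi> = exs [n..<N] Diag"
  have fv_atoms: "\<forall>a\<in>set atoms. fv a \<subseteq> {..<N}"
    unfolding atoms_def by (auto simp: set_n_lists)
  have "fv Diag \<subseteq> {..<N}" unfolding Diag_def fv_conjs using fv_atoms by (auto simp: lit_def)
  then have fvphi: "fv \<phi> \<subseteq> {..<n}" unfolding \<phi>_def fv_exs by auto
  have wM: "\<forall>i\<in>set [n..<N]. w i \<in> M"
  proof
    fix i assume "i \<in> set [n..<N]"
    then have i: "n \<le> i" "i < N" "i - n < length bs" unfolding N_def by auto
    then have "w i = bs ! (i - n)" unfolding w_def by simp
    moreover have "bs ! (i - n) \<in> B" using nth_mem[OF i(3)] bs(1) by simp
    ultimately show "w i \<in> M" using BM by auto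
  qed
  have satD: "sat M I w Diag" unfolding Diag_def sat_conjs by (auto simp: lit_def)
  have satphi: "sat M I v \<phi>" unfolding \<phi>_def sat_exs
    by (rule exI[of _ w]) (use wM satD in \<open>auto simp: w_def\<close>)
  have wB: "w ` {..<N} = B"
  proof
    show "w ` {..<N} \<subseteq> B" using AB bs unfolding A_def w_def N_def by auto
    show "B \<subseteq> w ` {..<N}"
    proof
      fix b assume "b \<in> B"
      then obtain k where k: "k < length bs" "bs ! k = b" using bs by (metis in_set_conv_nth)
      then have "w (n + k) = b" "n + k < N" unfolding w_def N_def by auto
      then show "b \<in> w ` {..<N}" by (metis imageI lessThan_iff)
    qed
  qed
  show "\<exists>\<phi>. fv \<phi> \<subseteq> {..<n} \<and> sat M I v \<phi> \<and>
        (\<forall>\<psi>. fv \<psi> \<subseteq> {..<n} \<and> sat M I v \<psi> \<longrightarrow> (\<forall>w. (\<forall>i<n. w i \<in> M) \<and> sat M I w \<phi> \<longrightarrow> sat M I w \<psi>))"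
  proof (intro exI[of _ \<phi>] conjI allI impI)
    show "fv \<phi> \<subseteq> {..<n}" by fact
    show "sat M I v \<phi>" by fact
    fix \<psi> w0 assume \<psi>: "fv \<psi> \<subseteq> {..<n} \<and> sat M I v \<psi>" and w0: "(\<forall>i<n. w0 i \<in> M) \<and> sat M I w0 \<phi>"
    then obtain w' where w': "\<forall>i. i \<notin> set [n..<N] \<longrightarrow> w' i = w0 i" "\<forall>i\<in>set [n..<N]. w' i \<in> M"
      "sat M I w' Diag" unfolding \<phi>_def sat_exs by blast
    have w'M: "\<forall>i<N. w' i \<in> M" using w' w0 by (metis atLeastLessThan_iff not_less set_upt)
    have lits: "sat M I w' a = sat M I w a" if a: "a \<in> set atoms" for a
    proof -
      have "sat M I w' (lit M I w a)" using w'(3) a unfolding Diag_def sat_conjs by simp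
      then show ?thesis unfolding lit_def by (cases "sat M I w a") auto
    qed
    have eqs: "\<And>i j. i < N \<Longrightarrow> j < N \<Longrightarrow> w' i = w' j \<longleftrightarrow> w i = w j"
    proof -
      fix i j assume "i < N" "j < N"
      then have "Eq i j \<in> set [Eq i j. i <- [0..<N], j <- [0..<N]]" by (auto simp: image_iff)
      then have "Eq i j \<in> set atoms" unfolding atoms_def set_append by (rule UnI1)
      from lits[OF this] show "w' i = w' j \<longleftrightarrow> w i = w j" by simp
    qed
    define idx where "idx = (\<lambda>a. SOME i. i < N \<and> w i = a)"
    have idx: "idx a < N \<and> w (idx a) = a" if a: "a \<in> B" for a
    proof -
      have "a \<in> w ` {..<N}" using a wB by simp
      then have "\<exists>i. i < N \<and> w i = a" by auto
      then show ?thesis unfolding idx_def by (rule someI_ex)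
    qed
    define h where "h = (\<lambda>a. w' (idx a))"
    have hw: "\<And>i. i < N \<Longrightarrow> h (w i) = w' i"
    proof -
      fix i assume i: "i < N"
      then have "w i \<in> B" using wB by auto
      then show "h (w i) = w' i" unfolding h_def using idx eqs i by metis
    qed
    have hinj: "inj_on h B"
    proof
      fix a b assume "a \<in> B" "b \<in> B" "h a = h b"
      then show "a = b" using idx eqs unfolding h_def by metis
    qed
    have hM: "h ` B \<subseteq> M" using idx w'M unfolding h_def by auto
    have emb: "embedding h B I M I" unfolding embedding_def
    proof (intro conjI allI impI)
      show "inj_on h B" by fact
      show "h ` B \<subseteq> M" by fact
      fix E s assume s: "s \<subseteq> B"
      have cs: "card (h ` s) = card s" using inj_on_subset[OF hinj s] card_image by blast
      show "s \<in> I E \<longleftrightarrow> h ` s \<in> I E"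
      proof (cases "card s = ar E")
        case False
        then show ?thesis using wfM cs unfolding wf_struct_def by metis
      next
        case True
        have fs: "finite s" using s fB finite_subset by blast
        obtain ys where ys: "set ys = s" "distinct ys" using finite_distinct_list[OF fs] by blast
        define xs where "xs = map idx ys"
        have mw: "map w xs = ys" unfolding xs_def map_map
        proof (rule map_idI)
          fix a assume "a \<in> set ys"
          then have "a \<in> B" using ys s by auto
          then show "(w \<circ> idx) a = a" using idx by simp
        qed
        have mw': "map w' xs = map h ys" unfolding xs_def h_def by simp
        have "length xs = ar E" unfolding xs_def using ys True distinct_card by fastforce
        moreover have "set xs \<subseteq> set [0..<N]" unfolding xs_def using ys s idx by auto
        ultimately have "Rel E xs \<in> set atoms" unfolding atoms_def using es by (auto simp: set_n_lists)
        from lits[OF this] have "sat M I w' (Rel E xs) = sat M I w (Rel E xs)" .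
        moreover have "distinct (map h ys)" using ys distinct_map inj_on_subset[OF hinj s] by blast
        ultimately show ?thesis using mw mw' ys by (simp only: sat.simps set_map) simp
      qed
    qed
    have "piso \<alpha> I M h B" unfolding piso_def using gB emb by auto
    moreover have "\<forall>i\<in>fv \<psi>. w i \<in> B" using \<psi> wB N_def by auto
    ultimately have "sat M I w \<psi> = sat M I (h \<circ> w) \<psi>" using pr by blast
    moreover have "sat M I w \<psi> = sat M I v \<psi>" using \<psi> by (intro sat_cong) (auto simp: w_def)
    moreover have "sat M I (h \<circ> w) \<psi> = sat M I w0 \<psi>"
      using \<psi> hw w'(1) N_def by (intro sat_cong) auto
    ultimately show "sat M I w0 \<psi>" using \<psi> by simp
  qed
qed

end
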